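(* Let $G$ be a simple connected undirected graph with vertex set $V(G)=\{1,2,\ldots,n\}$. Define the coefficient matrix $A$, indexed by pairs $(u,v)$ with $1\le u<v\le n$ and pairs $(i,j)$ with $1\le i<j\le n$, by $A_{(u,v),(i,j)}=1$ if $d(u,i)\neq d(v,i)$ and $d(u,j)\neq d(v,j)$, and $A_{(u,v),(i,j)}=0$ otherwise. For a subset $W\subseteq V(G)$, let $x_k=1$ if $k\in W$ and $x_k=0$ otherwise ($1\le k\le n$), and let $y_{ij}=1$ if $i,j\in W$ and $y_{ij}=0$ otherwise ($1\le i<j\le n$). Then $W$ is a fault-tolerant resolving set of $G$ if and only if the following constraints are satisfied: (a) $\sum_{i=1}^{n-1}\sum_{j=i+1}^{n} A_{(u,v),(i,j)}\,y_{ij}\ge 1$ for all $1\le u<v\le n$; (b) $y_{ij}\le \tfrac12 x_i+\tfrac12 x_j$ for all $1\le i<j\le n$; (c) $y_{ij}\ge x_i+x_j-1$ for all $1\le i<j\le n$; (d) $y_{ij}\in\{0,1\}$ and $x_k\in\{0,1\}$ for all $1\le i<j\le n$, $1\le k\le n$.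
   Context: $d(u,v)$ denotes the length of a shortest $u$–$v$ path in $G$. A vertex $w$ resolves vertices $u,v$ if $d(u,w)\neq d(v,w)$. A set $W\subseteq V(G)$ is a resolving set if every two distinct vertices of $G$ are resolved by some vertex of $W$. A resolving set $W$ is fault-tolerant if $W\setminus\{w\}$ is also a resolving set of $G$ for each $w\in W$. *)

theory Defs
  imports Complex_Main
begin

definition simple_graph :: "nat \<Rightarrow> (nat \<Rightarrow> nat \<Rightarrow> bool) \<Rightarrow> bool" where
  "simple_graph n E \<longleftrightarrow>
     (\<forall>u v. E u v \<longrightarrow> u \<in> {1..n} \<and> v \<in> {1..n}) \<and>
     (\<forall>u v. E u v \<longrightarrow> E v u) \<and> (\<forall>u. \<not> E u u)"

definition walk :: "(nat \<Rightarrow> nat \<Rightarrow> bool) \<Rightarrow> nat list \<Rightarrow> bool" where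
  "walk E xs \<longleftrightarrow> xs \<noteq> [] \<and> (\<forall>i. i + 1 < length xs \<longrightarrow> E (xs ! i) (xs ! (i + 1)))"

definition connected_graph :: "nat \<Rightarrow> (nat \<Rightarrow> nat \<Rightarrow> bool) \<Rightarrow> bool" where
  "connected_graph n E \<longleftrightarrow>
     (\<forall>u\<in>{1..n}. \<forall>v\<in>{1..n}. \<exists>xs. walk E xs \<and> hd xs = u \<and> last xs = v)"

definition dist :: "(nat \<Rightarrow> nat \<Rightarrow> bool) \<Rightarrow> nat \<Rightarrow> nat \<Rightarrow> nat" where
  "dist E u v = (LEAST k. \<exists>xs. walk E xs \<and> hd xs = u \<and> last xs = v \<and> length xs = k + 1)"

definition resolves :: "(nat \<Rightarrow> nat \<Rightarrow> bool) \<Rightarrow> nat \<Rightarrow> nat \<Rightarrow> nat \<Rightarrow> bool" where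
  "resolves E w u v \<longleftrightarrow> dist E u w \<noteq> dist E v w"

definition resolving_set :: "nat set \<Rightarrow> (nat \<Rightarrow> nat \<Rightarrow> bool) \<Rightarrow> nat set \<Rightarrow> bool" where
  "resolving_set V E W \<longleftrightarrow> W \<subseteq> V \<and>
     (\<forall>u\<in>V. \<forall>v\<in>V. u \<noteq> v \<longrightarrow> (\<exists>w\<in>W. resolves E w u v))"

definition fault_tolerant_resolving_set :: "nat set \<Rightarrow> (nat \<Rightarrow> nat \<Rightarrow> bool) \<Rightarrow> nat set \<Rightarrow> bool" where
  "fault_tolerant_resolving_set V E W \<longleftrightarrow>
     resolving_set V E W \<and> (\<forall>w\<in>W. resolving_set V E (W - {w}))"

end

theory Submission
  imports Defs
begin

lemma sum_ge1_iff:
  fixes f :: "nat \<Rightarrow> nat \<Rightarrow> real"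
  assumes "\<And>i j. f i j \<in> {0,1}"
  shows "(\<Sum>i = 1..n - 1. \<Sum>j = i + 1..n. f i j) \<ge> 1 \<longleftrightarrow>
         (\<exists>i j. 1 \<le> i \<and> i < j \<and> j \<le> n \<and> f i j = 1)"
proof
  assume h: "(\<Sum>i = 1..n - 1. \<Sum>j = i + 1..n. f i j) \<ge> 1"
  show "\<exists>i j. 1 \<le> i \<and> i < j \<and> j \<le> n \<and> f i j = 1"
  proof (rule ccontr)
    assume "\<not> ?thesis"
    hence "\<forall>i\<in>{1..n-1}. \<forall>j\<in>{i+1..n}. f i j = 0" using assms by fastforce
    hence "(\<Sum>i = 1..n - 1. \<Sum>j = i + 1..n. f i j) = 0" by simp
    with h show False by simp
  qed
next
  assume "\<exists>i j. 1 \<le> i \<and> i < j \<and> j \<le> n \<and> f i j = 1"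
  then obtain i j where ij: "1 \<le> i" "i < j" "j \<le> n" "f i j = 1" by blast
  have nn: "\<And>i j. f i j \<ge> 0" using assms by (metis empty_iff insert_iff order_refl zero_le_one)
  have "f i j \<le> (\<Sum>j = i + 1..n. f i j)"
    by (rule member_le_sum) (use ij nn in auto)
  also have "\<dots> \<le> (\<Sum>i = 1..n - 1. \<Sum>j = i + 1..n. f i j)"
    by (rule member_le_sum) (use ij nn in \<open>auto intro: sum_nonneg\<close>)
  finally show "(\<Sum>i = 1..n - 1. \<Sum>j = i + 1..n. f i j) \<ge> 1" using ij by simp
qed

lemma ft_iff:
  assumes "W \<subseteq> V"
  shows "fault_tolerant_resolving_set V E W \<longleftrightarrow>
    (\<forall>u\<in>V. \<forall>v\<in>V. u \<noteq> v \<longrightarrow> (\<exists>i\<in>W. \<exists>j\<in>W. i \<noteq> j \<and> resolves E i u v \<and> resolves E j u v))"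
proof
  assume h: "fault_tolerant_resolving_set V E W"
  show "\<forall>u\<in>V. \<forall>v\<in>V. u \<noteq> v \<longrightarrow> (\<exists>i\<in>W. \<exists>j\<in>W. i \<noteq> j \<and> resolves E i u v \<and> resolves E j u v)"
  proof (intro ballI impI)
    fix u v assume uv: "u \<in> V" "v \<in> V" "u \<noteq> v"
    from h uv obtain i where i: "i \<in> W" "resolves E i u v"
      unfolding fault_tolerant_resolving_set_def resolving_set_def by blast
    from h i have "resolving_set V E (W - {i})" unfolding fault_tolerant_resolving_set_def by blast
    with uv obtain j where "j \<in> W - {i}" "resolves E j u v" unfolding resolving_set_def by blast
    with i show "\<exists>i\<in>W. \<exists>j\<in>W. i \<noteq> j \<and> resolves E i u v \<and> resolves E j u v" by blast
  qed
next
  assume h: "\<forall>u\<in>V. \<forall>v\<in>V. u \<noteq> v \<longrightarrow> (\<exists>i\<in>W. \<exists>j\<in>W. i \<noteq> j \<and> resolves E i u v \<and> resolves E j u v)"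
  have "resolving_set V E W" using h assms unfolding resolving_set_def by blast
  moreover have "resolving_set V E (W - {w})" if "w \<in> W" for w
    unfolding resolving_set_def
  proof (intro conjI ballI impI)
    show "W - {w} \<subseteq> V" using assms by blast
    fix u v assume "u \<in> V" "v \<in> V" "u \<noteq> v"
    with h obtain i j where "i\<in>W" "j\<in>W" "i \<noteq> j" "resolves E i u v" "resolves E j u v" by blast
    then show "\<exists>w'\<in>W - {w}. resolves E w' u v" by (cases "i = w") auto
  qed
  ultimately show "fault_tolerant_resolving_set V E W" unfolding fault_tolerant_resolving_set_def by blast
qed

theorem proposition2p3:
  fixes n :: nat and E :: "nat \<Rightarrow> nat \<Rightarrow> bool" and W :: "nat set"
    and A :: "nat \<Rightarrow> nat \<Rightarrow> nat \<Rightarrow> nat \<Rightarrow> real"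
    and x :: "nat \<Rightarrow> real" and y :: "nat \<Rightarrow> nat \<Rightarrow> real"
  assumes "simple_graph n E" and "connected_graph n E"
    and "W \<subseteq> {1..n}"
  defines "A \<equiv> (\<lambda>u v i j. if dist E u i \<noteq> dist E v i \<and> dist E u j \<noteq> dist E v j then 1 else 0)"
    and "x \<equiv> (\<lambda>k. if k \<in> W then 1 else 0)"
    and "y \<equiv> (\<lambda>i j. if i \<in> W \<and> j \<in> W then 1 else 0)"
  shows "fault_tolerant_resolving_set {1..n} E W \<longleftrightarrow>
    (\<forall>u v. 1 \<le> u \<and> u < v \<and> v \<le> n \<longrightarrow>
        (\<Sum>i = 1..n - 1. \<Sum>j = i + 1..n. A u v i j * y i j) \<ge> 1) \<and>
    (\<forall>i j. 1 \<le> i \<and> i < j \<and> j \<le> n \<longrightarrow> y i j \<le> 1/2 * x i + 1/2 * x j) \<and>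
    (\<forall>i j. 1 \<le> i \<and> i < j \<and> j \<le> n \<longrightarrow> y i j \<ge> x i + x j - 1) \<and>
    (\<forall>i j. 1 \<le> i \<and> i < j \<and> j \<le> n \<longrightarrow> y i j \<in> {0, 1}) \<and>
    (\<forall>k. 1 \<le> k \<and> k \<le> n \<longrightarrow> x k \<in> {0, 1})"
proof -
  have rest: "(\<forall>i j. 1 \<le> i \<and> i < j \<and> j \<le> n \<longrightarrow> y i j \<le> 1/2 * x i + 1/2 * x j) \<and>
    (\<forall>i j. 1 \<le> i \<and> i < j \<and> j \<le> n \<longrightarrow> y i j \<ge> x i + x j - 1) \<and>
    (\<forall>i j. 1 \<le> i \<and> i < j \<and> j \<le> n \<longrightarrow> y i j \<in> {0, 1}) \<and>
    (\<forall>k. 1 \<le> k \<and> k \<le> n \<longrightarrow> x k \<in> {0, 1})"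
    unfolding x_def y_def by auto
  have a: "(\<Sum>i = 1..n - 1. \<Sum>j = i + 1..n. A u v i j * y i j) \<ge> 1 \<longleftrightarrow>
      (\<exists>i j. 1 \<le> i \<and> i < j \<and> j \<le> n \<and> i \<in> W \<and> j \<in> W \<and> resolves E i u v \<and> resolves E j u v)" for u v
    by (subst sum_ge1_iff) (auto simp: A_def y_def resolves_def)
  have b: "(\<exists>i j. 1 \<le> i \<and> i < j \<and> j \<le> n \<and> i \<in> W \<and> j \<in> W \<and> resolves E i u v \<and> resolves E j u v)
      \<longleftrightarrow> (\<exists>i\<in>W. \<exists>j\<in>W. i \<noteq> j \<and> resolves E i u v \<and> resolves E j u v)" for u v
  proof
    assume "\<exists>i\<in>W. \<exists>j\<in>W. i \<noteq> j \<and> resolves E i u v \<and> resolves E j u v"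
    then obtain i j where "i\<in>W" "j\<in>W" "i \<noteq> j" "resolves E i u v" "resolves E j u v" by blast
    with assms(3) show "\<exists>i j. 1 \<le> i \<and> i < j \<and> j \<le> n \<and> i \<in> W \<and> j \<in> W \<and> resolves E i u v \<and> resolves E j u v"
    proof (cases "i < j")
      case True
      then show ?thesis using \<open>i\<in>W\<close> \<open>j\<in>W\<close> \<open>resolves E i u v\<close> \<open>resolves E j u v\<close> assms(3)
        by (intro exI[of _ i] exI[of _ j]) auto
    next
      case False
      then have "j < i" using \<open>i \<noteq> j\<close> by simp
      then show ?thesis using \<open>i\<in>W\<close> \<open>j\<in>W\<close> \<open>resolves E i u v\<close> \<open>resolves E j u v\<close> assms(3)
        by (intro exI[of _ j] exI[of _ i]) auto
    qed
  qed (metis less_irrefl)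
  have sym: "resolves E i u v \<longleftrightarrow> resolves E i v u" for i u v
    by (auto simp: resolves_def)
  have "(\<forall>u\<in>{1..n}. \<forall>v\<in>{1..n}. u \<noteq> v \<longrightarrow> (\<exists>i\<in>W. \<exists>j\<in>W. i \<noteq> j \<and> resolves E i u v \<and> resolves E j u v))
     \<longleftrightarrow> (\<forall>u v. 1 \<le> u \<and> u < v \<and> v \<le> n \<longrightarrow> (\<exists>i\<in>W. \<exists>j\<in>W. i \<noteq> j \<and> resolves E i u v \<and> resolves E j u v))"
  proof
    assume h: "\<forall>u v. 1 \<le> u \<and> u < v \<and> v \<le> n \<longrightarrow> (\<exists>i\<in>W. \<exists>j\<in>W. i \<noteq> j \<and> resolves E i u v \<and> resolves E j u v)"
    show "\<forall>u\<in>{1..n}. \<forall>v\<in>{1..n}. u \<noteq> v \<longrightarrow> (\<exists>i\<in>W. \<exists>j\<in>W. i \<noteq> j \<and> resolves E i u v \<and> resolves E j u v)"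
    proof (intro ballI impI)
      fix u v assume "u \<in> {1..n}" "v \<in> {1..n}" "u \<noteq> v"
      then show "\<exists>i\<in>W. \<exists>j\<in>W. i \<noteq> j \<and> resolves E i u v \<and> resolves E j u v"
        using h[rule_format, of u v] h[rule_format, of v u] sym
        by (cases "u < v") auto
    qed
  qed auto
  then show ?thesis using rest a b ft_iff[OF assms(3)] by simp
qed

end
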